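(* Let $\boldsymbol\eta$ be a standard max-stable process, let $\mathbf Y$ be a stochastic process in $C[0,1]$ with independent copies $\mathbf Y_1,\mathbf Y_2,\dots$, and let $a_n\in C[0,1]$ with $a_n>0$ and $b_n\in C[0,1]$, $n\in\mathbb N$. Then \[ \lim_{n\to\infty}P\Big(\max_{1\le i\le n}\frac{\mathbf Y_i-b_n}{a_n}\le f\Big)=P(\boldsymbol\eta\le f)\quad\text{for every } f\in\bar E^-[0,1] \] holds if and only if \[ \lim_{n\to\infty}P\Big(\max_{1\le i\le n}\frac{\mathbf Y_i-b_n}{a_n}< f\Big)=P(\boldsymbol\eta< f)\quad\text{for every } f\in\bar E^-[0,1]. \]
   Context: $E[0,1]$: bounded functions on $[0,1]$ with finitely many discontinuities; $\bar E^-[0,1]=\{f\in E[0,1]:f\le 0\}$. Maxima and inequalities between processes and functions are pointwise ($\le f$ meaning $\le f(t)$ for all $t$, $<f$ meaning $<f(t)$ for all $t$). A standard max-stable process is a process $\boldsymbol\eta$ with paths in $\bar C^-[0,1]=\{f\in C[0,1]:f\le0\}$ that is max-stable (for iid copies and each $n$ there are $\alpha_n>0,\beta_n\in C[0,1]$ with $\boldsymbol\eta=_D\max_{i\le n}(\boldsymbol\eta_i-\beta_n)/\alpha_n$) and has margins $P(\eta_t\le x)=e^x$, $x\le 0$; its functional distribution function is $P(\boldsymbol\eta\le f)=\exp(-\|f\|_D)$, $f\in\bar E^-[0,1]$, where $\|f\|_D=E(\sup_t|f(t)|Z_t)$ for a generator process $\mathbf Z$ (continuous nonnegative paths, $\max_tZ_t=m\in[1,\infty)$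 a.s., $E Z_t=1$). The first displayed condition is the definition of "$\mathbf Y$ is in the functional domain of attraction of $\boldsymbol\eta$". *)

theory Defs
  imports "HOL-Probability.Probability"
begin

text \<open>Functions on [0,1] are represented as real \<Rightarrow> real; only values on {0..1} matter.\<close>

definition C01 :: "(real \<Rightarrow> real) set" where
  "C01 = {f. continuous_on {0..1} f}"

definition E01 :: "(real \<Rightarrow> real) set" where
  "E01 = {f. bounded (f ` {0..1}) \<and>
              finite {t \<in> {0..1}. \<not> continuous (at t within {0..1}) f}}"

definition E01neg :: "(real \<Rightarrow> real) set" where
  "E01neg = {f \<in> E01. \<forall>t\<in>{0..1}. f t \<le> 0}"

abbreviation P01 :: "(real \<Rightarrow> real) measure" where
  "P01 \<equiv> PiM {0..1} (\<lambda>_. borel)"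

definition cont_process :: "'a measure \<Rightarrow> ('a \<Rightarrow> real \<Rightarrow> real) \<Rightarrow> bool" where
  "cont_process M X \<longleftrightarrow>
     (\<forall>t\<in>{0..1}. (\<lambda>\<omega>. X \<omega> t) \<in> borel_measurable M) \<and>
     (\<forall>\<omega>\<in>space M. continuous_on {0..1} (X \<omega>))"

definition path_law :: "'a measure \<Rightarrow> ('a \<Rightarrow> real \<Rightarrow> real) \<Rightarrow> (real \<Rightarrow> real) measure" where
  "path_law M X = distr M P01 (\<lambda>\<omega>. restrict (X \<omega>) {0..1})"

definition std_max_stable :: "'a measure \<Rightarrow> ('a \<Rightarrow> real \<Rightarrow> real) \<Rightarrow> bool" where
  "std_max_stable N \<eta> \<longleftrightarrow>
     prob_space N \<and> cont_process N \<eta> \<and>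
     (\<forall>\<omega>\<in>space N. \<forall>t\<in>{0..1}. \<eta> \<omega> t \<le> 0) \<and>
     (\<forall>n::nat. n \<ge> 1 \<longrightarrow> (\<exists>\<alpha> \<beta>. continuous_on {0..1} \<alpha> \<and> (\<forall>t\<in>{0..1}. \<alpha> t > 0) \<and>
        continuous_on {0..1} \<beta> \<and>
        distr (PiM {..<n} (\<lambda>_. path_law N \<eta>)) P01
          (\<lambda>gs. \<lambda>t\<in>{0..1}. (MAX i\<in>{..<n}. (gs i t - \<beta> t) / \<alpha> t))
        = path_law N \<eta>)) \<and>
     (\<forall>t\<in>{0..1}. \<forall>x::real. x \<le> 0 \<longrightarrow> measure N {\<omega> \<in> space N. \<eta> \<omega> t \<le> x} = exp x)"

definition indep_copies :: "'a measure \<Rightarrow> ('a \<Rightarrow> real \<Rightarrow> real) \<Rightarrow> (nat \<Rightarrow> 'a \<Rightarrow> real \<Rightarrow> real) \<Rightarrow> bool" where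
  "indep_copies M Y Ys \<longleftrightarrow>
     prob_space.indep_vars M (\<lambda>_. P01) (\<lambda>i \<omega>. restrict (Ys i \<omega>) {0..1}) UNIV \<and>
     (\<forall>i. path_law M (Ys i) = path_law M Y)"

end

theory Submission
  imports Defs
begin


lemma rat_near:
  fixes t r :: real
  assumes "t \<in> {0..1}" "r > 0"
  shows "\<exists>q\<in>\<rat>. q \<in> {0..1} \<and> \<bar>q - t\<bar> < r"
proof (cases "t < 1")
  case True
  obtain q where q: "q \<in> \<rat>" "t < q" "q < min (t + r) 1"
    using Rats_dense_in_real[of t "min (t+r) 1"] True assms by auto
  then show ?thesis using assms by (intro bexI[of _ q]) auto
next
  case False
  then have t1: "t = 1" using assms by auto
  obtain q where q: "q \<in> \<rat>" "max (1 - r) 0 < q" "q < 1"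
    using Rats_dense_in_real[of "max (1-r) 0" 1] assms by auto
  then show ?thesis using t1 by (intro bexI[of _ q]) auto
qed

lemma cont_rat_le:
  fixes h :: "real \<Rightarrow> real"
  assumes c: "continuous (at t within {0..1}) h" and t: "t \<in> {0..1}" and d: "d > 0"
    and le: "\<forall>q\<in>\<rat> \<inter> {0..1}. \<bar>q - t\<bar> < d \<longrightarrow> h q \<le> C"
  shows "h t \<le> C"
proof (rule ccontr)
  assume "\<not> h t \<le> C"
  then have "h t - C > 0" by simp
  from c[unfolded continuous_within_eps_delta, rule_format, OF this]
  obtain e where e: "e > 0" "\<forall>x'\<in>{0..1}. dist x' t < e \<longrightarrow> dist (h x') (h t) < h t - C" by auto
  obtain q where q: "q \<in> \<rat>" "q \<in> {0..1}" "\<bar>q - t\<bar> < min e d"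
    using rat_near[OF t, of "min e d"] e d by auto
  then have "h q \<le> C" using le by auto
  moreover have "dist (h q) (h t) < h t - C" using e q by (auto simp: dist_real_def)
  ultimately show False by (auto simp: dist_real_def)
qed

definition SF :: "real set \<Rightarrow> real set" where
  "SF F = (\<rat> \<inter> {0..1}) \<union> (F \<inter> {0..1})"

definition cont_off :: "real set \<Rightarrow> (real \<Rightarrow> real) \<Rightarrow> bool" where
  "cont_off F g \<longleftrightarrow> (\<forall>t\<in>{0..1} - F. continuous (at t within {0..1}) g)"

lemma SF_sub: "SF F \<subseteq> {0..1}" unfolding SF_def by auto

lemma countable_SF: "finite F \<Longrightarrow> countable (SF F)"
  unfolding SF_def using countable_rat
  by (intro countable_Un) (auto intro: countable_subset countable_finite)

lemma le_iff_rat: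
  assumes x: "continuous_on {0..1} x" and g: "cont_off F g"
  shows "(\<forall>t\<in>{0..1}. x t \<le> g t) \<longleftrightarrow> (\<forall>t\<in>SF F. x t \<le> g t)"
proof
  assume "\<forall>t\<in>{0..1}. x t \<le> g t" then show "\<forall>t\<in>SF F. x t \<le> g t" using SF_sub by auto
next
  assume H: "\<forall>t\<in>SF F. x t \<le> g t"
  show "\<forall>t\<in>{0..1}. x t \<le> g t"
  proof
    fix t :: real assume t: "t \<in> {0..1}"
    show "x t \<le> g t"
    proof (cases "t \<in> F")
      case True then show ?thesis using H t by (auto simp: SF_def)
    next
      case False
      have c1: "continuous (at t within {0..1}) x" using x t continuous_on_eq_continuous_within by blast
      have c2: "continuous (at t within {0..1}) g" using g t False by (auto simp: cont_off_def)
      have "continuous (at t within {0..1}) (\<lambda>s. x s - g s)" using c1 c2 by (intro continuous_intros)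
      from cont_rat_le[OF this t zero_less_one, of 0] H show ?thesis by (auto simp: SF_def)
    qed
  qed
qed

lemma finite_avoid_dist:
  fixes t :: real
  assumes "finite F" "t \<notin> F"
  shows "\<exists>d>0. \<forall>y\<in>F. d \<le> \<bar>t - y\<bar>"
proof (cases "F = {}")
  case True then show ?thesis by (intro exI[of _ 1]) auto
next
  case False
  let ?d = "Min ((\<lambda>y. \<bar>t - y\<bar>) ` F)"
  have "?d > 0" using assms False by (subst Min_gr_iff) auto
  moreover have "\<forall>y\<in>F. ?d \<le> \<bar>t - y\<bar>" using assms by (auto intro: Min_le)
  ultimately show ?thesis by blast
qed

lemma lt_iff_rat:
  assumes x: "continuous_on {0..1} x" and g: "cont_off F g" and F: "finite F"
  shows "(\<forall>t\<in>{0..1}. x t < g t) \<longleftrightarrow>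
    ((\<forall>t\<in>F \<inter> {0..1}. x t < g t) \<and>
     (\<forall>m::nat. \<exists>j::nat. \<forall>q\<in>\<rat> \<inter> {0..1}. (\<forall>y\<in>F. 1/(real m+1) \<le> \<bar>q - y\<bar>) \<longrightarrow> x q - g q \<le> -1/(real j+1)))"
    (is "?L \<longleftrightarrow> ?R1 \<and> ?R2")
proof
  assume L: ?L
  have "?R2"
  proof
    fix m :: nat
    define K where "K = {t\<in>{0..1}. \<forall>y\<in>F. 1/(real m+1) \<le> \<bar>t - y\<bar>}"
    have Keq: "K = {0..1} \<inter> (\<Inter>y\<in>F. {t. 1/(real m+1) \<le> \<bar>t - y\<bar>})" unfolding K_def by auto
    have "closed K" unfolding Keq
      by (intro closed_Int closed_INT ballI closed_Collect_le continuous_intros) auto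
    moreover have "bounded K" unfolding K_def by (rule bounded_subset[of "{0..1}"]) auto
    ultimately have cK: "compact K" by (simp add: compact_eq_bounded_closed)
    have KF: "K \<subseteq> {0..1} - F" unfolding K_def by auto
    have ch: "continuous_on K (\<lambda>s. x s - g s)"
    proof (subst continuous_on_eq_continuous_within, intro ballI)
      fix t assume t: "t \<in> K"
      have c1: "continuous (at t within {0..1}) x" using x t KF continuous_on_eq_continuous_within by blast
      have c2: "continuous (at t within {0..1}) g" using g t KF by (auto simp: cont_off_def)
      have "continuous (at t within {0..1}) (\<lambda>s. x s - g s)" using c1 c2 by (intro continuous_intros)
      then show "continuous (at t within K) (\<lambda>s. x s - g s)"
        by (rule continuous_within_subset) (use KF in auto)
    qed
    show "\<exists>j::nat. \<forall>q\<in>\<rat> \<inter> {0..1}. (\<forall>y\<in>F. 1/(real m+1) \<le> \<bar>q - y\<bar>) \<longrightarrow> x q - g q \<le> -1/(real j+1)"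
    proof (cases "K = {}")
      case True
      show ?thesis
      proof (intro exI[of _ 0] ballI impI)
        fix q assume "q \<in> \<rat> \<inter> {0..1}" "\<forall>y\<in>F. 1/(real m+1) \<le> \<bar>q - y\<bar>"
        then have "q \<in> K" unfolding K_def by auto
        then show "x q - g q \<le> -1/(real 0+1)" using True by auto
      qed
    next
      case False
      obtain s where s: "s \<in> K" "\<forall>t\<in>K. x t - g t \<le> x s - g s"
        using continuous_attains_sup[OF cK False ch] by auto
      have neg: "x s - g s < 0" using L s KF by auto
      obtain j :: nat where j: "inverse (real (Suc j)) < -(x s - g s)"
        using reals_Archimedean[of "-(x s - g s)"] neg by auto
      show ?thesis
      proof (intro exI[of _ j] ballI impI)
        fix q assume q: "q \<in> \<rat> \<inter> {0..1}" "\<forall>y\<in>F. 1/(real m+1) \<le> \<bar>q - y\<bar>"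
        then have "q \<in> K" unfolding K_def by auto
        then have "x q - g q \<le> x s - g s" using s by auto
        also have "\<dots> \<le> -1/(real j+1)" using j by (simp add: field_simps)
        finally show "x q - g q \<le> -1/(real j+1)" .
      qed
    qed
  qed
  then show "?R1 \<and> ?R2" using L by auto
next
  assume R: "?R1 \<and> ?R2"
  show ?L
  proof
    fix t :: real assume t: "t \<in> {0..1}"
    show "x t < g t"
    proof (cases "t \<in> F")
      case True then show ?thesis using R t by auto
    next
      case False
      obtain d where d: "d > 0" "\<forall>y\<in>F. d \<le> \<bar>t - y\<bar>" using finite_avoid_dist[OF F False] by auto
      obtain m :: nat where m: "inverse (real (Suc m)) < d/2"
        using reals_Archimedean[of "d/2"] d by auto
      obtain j :: nat where j: "\<forall>q\<in>\<rat> \<inter> {0..1}. (\<forall>y\<in>F. 1/(real m+1) \<le> \<bar>q - y\<bar>) \<longrightarrow> x q - g q \<le> -1/(real j+1)"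
        using R by blast
      have c1: "continuous (at t within {0..1}) x" using x t continuous_on_eq_continuous_within by blast
      have c2: "continuous (at t within {0..1}) g" using g t False by (auto simp: cont_off_def)
      have cc: "continuous (at t within {0..1}) (\<lambda>s. x s - g s)" using c1 c2 by (intro continuous_intros)
      have "x t - g t \<le> -1/(real j+1)"
      proof (rule cont_rat_le[OF cc t, of "d/2"])
        show "d/2 > 0" using d by simp
        show "\<forall>q\<in>\<rat> \<inter> {0..1}. \<bar>q - t\<bar> < d / 2 \<longrightarrow> x q - g q \<le> - 1 / (real j + 1)"
        proof (intro ballI impI)
          fix q assume q: "q \<in> \<rat> \<inter> {0..1}" "\<bar>q - t\<bar> < d/2"
          have "\<forall>y\<in>F. 1/(real m+1) \<le> \<bar>q - y\<bar>"
          proof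
            fix y assume "y \<in> F"
            then have "d \<le> \<bar>t - y\<bar>" using d by auto
            then have "d/2 \<le> \<bar>q - y\<bar>" using q(2) abs_triangle_ineq[of "t - q" "q - y"] by (auto simp: abs_minus_commute)
            moreover have "1/(real m+1) < d/2" using m by (simp add: inverse_eq_divide add.commute)
            ultimately show "1/(real m+1) \<le> \<bar>q - y\<bar>" by linarith
          qed
          then show "x q - g q \<le> -1/(real j+1)" using j q by auto
        qed
      qed
      moreover have "-1/(real j+1) < 0" by simp
      ultimately show ?thesis by linarith
    qed
  qed
qed

lemma meas_pt:
  assumes "cont_process M X" "t \<in> {0..1}"
  shows "{\<omega>\<in>space M. X \<omega> t \<le> c} \<in> sets M" "{\<omega>\<in>space M. X \<omega> t < c} \<in> sets M"
    "{\<omega>\<in>space M. X \<omega> t - c \<le> d} \<in> sets M" "{\<omega>\<in>space M. X \<omega> t = c} \<in> sets M"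
proof -
  have [measurable]: "(\<lambda>\<omega>. X \<omega> t) \<in> borel_measurable M" using assms by (auto simp: cont_process_def)
  show "{\<omega>\<in>space M. X \<omega> t \<le> c} \<in> sets M" "{\<omega>\<in>space M. X \<omega> t < c} \<in> sets M"
    "{\<omega>\<in>space M. X \<omega> t - c \<le> d} \<in> sets M" "{\<omega>\<in>space M. X \<omega> t = c} \<in> sets M" by measurable
qed

lemma meas_le_S:
  assumes "cont_process M X" "S \<subseteq> {0..1}" "countable S"
  shows "{\<omega>\<in>space M. \<forall>t\<in>S. X \<omega> t \<le> g t} \<in> sets M"
  by (rule sets.sets_Collect_countable_All'[OF _ assms(3)]) (use meas_pt[OF assms(1)] assms(2) in auto)

lemma meas_le:
  assumes X: "cont_process M X" and F: "finite F" and g: "cont_off F g"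
  shows "{\<omega>\<in>space M. \<forall>t\<in>{0..1}. X \<omega> t \<le> g t} \<in> sets M"
proof -
  have "{\<omega>\<in>space M. \<forall>t\<in>{0..1}. X \<omega> t \<le> g t} = {\<omega>\<in>space M. \<forall>t\<in>SF F. X \<omega> t \<le> g t}"
    using le_iff_rat[OF _ g] X by (auto simp: cont_process_def)
  also have "\<dots> \<in> sets M" by (rule meas_le_S[OF X SF_sub countable_SF[OF F]])
  finally show ?thesis .
qed

lemma meas_lt:
  assumes X: "cont_process M X" and F: "finite F" and g: "cont_off F g"
  shows "{\<omega>\<in>space M. \<forall>t\<in>{0..1}. X \<omega> t < g t} \<in> sets M"
proof -
  have "{\<omega>\<in>space M. \<forall>t\<in>{0..1}. X \<omega> t < g t} = {\<omega>\<in>space M. (\<forall>t\<in>F \<inter> {0..1}. X \<omega> t < g t) \<and>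
     (\<forall>m::nat. \<exists>j::nat. \<forall>q\<in>\<rat> \<inter> {0..1}. (\<forall>y\<in>F. 1/(real m+1) \<le> \<bar>q - y\<bar>) \<longrightarrow> X \<omega> q - g q \<le> -1/(real j+1))}"
  proof (intro Collect_cong conj_cong refl)
    fix \<omega> assume "\<omega> \<in> space M"
    then have "continuous_on {0..1} (X \<omega>)" using X by (auto simp: cont_process_def)
    from lt_iff_rat[OF this g F] show "(\<forall>t\<in>{0..1}. X \<omega> t < g t) = ((\<forall>t\<in>F \<inter> {0..1}. X \<omega> t < g t) \<and>
     (\<forall>m::nat. \<exists>j::nat. \<forall>q\<in>\<rat> \<inter> {0..1}. (\<forall>y\<in>F. 1/(real m+1) \<le> \<bar>q - y\<bar>) \<longrightarrow> X \<omega> q - g q \<le> -1/(real j+1)))" .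
  qed
  also have "\<dots> \<in> sets M"
  proof (intro sets.sets_Collect_conj sets.sets_Collect_countable_All sets.sets_Collect_countable_Ex)
    show "{\<omega>\<in>space M. \<forall>t\<in>F \<inter> {0..1}. X \<omega> t < g t} \<in> sets M"
      by (rule sets.sets_Collect_countable_All') (use meas_pt[OF X] F in \<open>auto intro: countable_finite\<close>)
    fix m j :: nat
    show "{\<omega>\<in>space M. \<forall>q::real\<in>\<rat> \<inter> {0..1}. (\<forall>y\<in>F. 1/(real m+1) \<le> \<bar>q - y\<bar>) \<longrightarrow> X \<omega> q - g q \<le> -1/(real j+1)} \<in> sets M"
    proof (rule sets.sets_Collect_countable_All')
      show "countable (\<rat> \<inter> {0..1})" using countable_rat by (rule countable_subset[rotated]) auto
      fix q :: real assume q: "q \<in> \<rat> \<inter> {0..1}"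
      show "{\<omega>\<in>space M. (\<forall>y\<in>F. 1/(real m+1) \<le> \<bar>q - y\<bar>) \<longrightarrow> X \<omega> q - g q \<le> -1/(real j+1)} \<in> sets M"
        by (intro sets.sets_Collect_imp sets.sets_Collect_const) (use meas_pt(3)[OF X] q in auto)
    qed
  qed
  finally show ?thesis .
qed

lemma restrict_meas:
  assumes "cont_process N \<eta>"
  shows "(\<lambda>\<omega>. restrict (\<eta> \<omega>) {0..1}) \<in> measurable N P01"
  using assms by (intro measurable_restrict) (auto simp: cont_process_def)

lemma P01_le_sets:
  assumes S: "S \<subseteq> {0..1}" "countable S"
  shows "{x\<in>space P01. \<forall>t\<in>S. x t \<le> h t} \<in> sets P01"
proof (rule sets.sets_Collect_countable_All'[OF _ S(2)])
  fix t assume t: "t \<in> S"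
  have [measurable]: "(\<lambda>x. x t) \<in> borel_measurable P01" using t S by (intro measurable_component_singleton) auto
  show "{x \<in> space P01. x t \<le> h t} \<in> sets P01" by measurable
qed

lemma prod_step:
  fixes \<eta> :: "'b \<Rightarrow> real \<Rightarrow> real"
  assumes N: "prob_space N" and X: "cont_process N \<eta>" and S: "S \<subseteq> {0..1}" "countable S"
   and n: "n \<ge> 1" and \<alpha>: "\<forall>t\<in>{0..1}. \<alpha> t > 0"
   and D: "distr (PiM {..<n} (\<lambda>_. path_law N \<eta>)) P01 (\<lambda>gs. \<lambda>t\<in>{0..1}. MAX i\<in>{..<n}. (gs i t - \<beta> t)/\<alpha> t) = path_law N \<eta>"
  shows "measure N {\<omega>\<in>space N. \<forall>t\<in>S. \<eta> \<omega> t \<le> g t} = (measure N {\<omega>\<in>space N. \<forall>t\<in>S. \<eta> \<omega> t \<le> \<alpha> t * g t + \<beta> t})^n"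
proof -
  define \<mu> where "\<mu> = path_law N \<eta>"
  have mr: "(\<lambda>\<omega>. restrict (\<eta> \<omega>) {0..1}) \<in> measurable N P01" by (rule restrict_meas[OF X])
  have pmu: "prob_space \<mu>" unfolding \<mu>_def path_law_def by (rule prob_space.prob_space_distr[OF N mr])
  define A where "A h = {x\<in>space P01. \<forall>t\<in>S. x t \<le> h t}" for h :: "real \<Rightarrow> real"
  have Asets: "A h \<in> sets P01" for h unfolding A_def by (rule P01_le_sets[OF S])
  have muA: "measure \<mu> (A h) = measure N {\<omega>\<in>space N. \<forall>t\<in>S. \<eta> \<omega> t \<le> h t}" for h
  proof -
    have "measure \<mu> (A h) = measure N ((\<lambda>\<omega>. restrict (\<eta> \<omega>) {0..1}) -` A h \<inter> space N)"
      unfolding \<mu>_def path_law_def by (rule measure_distr[OF mr Asets])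
    also have "(\<lambda>\<omega>. restrict (\<eta> \<omega>) {0..1}) -` A h \<inter> space N = {\<omega>\<in>space N. \<forall>t\<in>S. \<eta> \<omega> t \<le> h t}"
      using S(1) by (auto simp: A_def space_PiM)
    finally show ?thesis .
  qed
  define PP where "PP = PiM {..<n} (\<lambda>_. \<mu>)"
  define mx where "mx = (\<lambda>gs. \<lambda>t\<in>{0..1}. MAX i\<in>{..<n}. (gs i t - \<beta> t)/\<alpha> t)"
  have mxm: "mx \<in> measurable PP P01" unfolding mx_def PP_def
  proof (rule measurable_restrict)
    fix t :: real assume t: "t \<in> {0..1}"
    show "(\<lambda>gs. MAX i\<in>{..<n}. (gs i t - \<beta> t) / \<alpha> t) \<in> borel_measurable (PiM {..<n} (\<lambda>_. \<mu>))"
    proof (rule borel_measurable_Max)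
      fix i assume i: "i \<in> {..<n}"
      have [measurable]: "(\<lambda>gs. gs i) \<in> measurable (PiM {..<n} (\<lambda>_. \<mu>)) \<mu>"
        using i by (rule measurable_component_singleton)
      have sm: "sets \<mu> = sets P01" unfolding \<mu>_def path_law_def by simp
      have [measurable]: "(\<lambda>x. x t) \<in> borel_measurable \<mu>"
        using t by (subst measurable_cong_sets[OF sm refl]) (intro measurable_component_singleton)
      show "(\<lambda>gs. (gs i t - \<beta> t) / \<alpha> t) \<in> borel_measurable (PiM {..<n} (\<lambda>_. \<mu>))" by measurable
    qed simp
  qed
  interpret P: finite_product_prob_space "\<lambda>_. \<mu>" "{..<n}"
    by (intro finite_product_prob_space.intro finite_product_sigma_finite.intro product_prob_spaceI
        finite_product_sigma_finite_axioms.intro pmu product_prob_space.axioms(1)) auto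
  have "measure \<mu> (A g) = measure (distr PP P01 mx) (A g)"
    using D unfolding \<mu>_def mx_def PP_def by simp
  also have "\<dots> = measure PP (mx -` A g \<inter> space PP)" by (rule measure_distr[OF mxm Asets])
  also have "mx -` A g \<inter> space PP = PiE {..<n} (\<lambda>_. A (\<lambda>t. \<alpha> t * g t + \<beta> t))"
  proof -
    have sm: "space \<mu> = space P01" unfolding \<mu>_def path_law_def by simp
    have ne: "{..<n} \<noteq> {}" using n by (metis empty_iff lessThan_iff less_le_trans zero_less_one)
    { fix gs assume gs: "gs \<in> space PP"
      have "mx gs \<in> A g \<longleftrightarrow> (\<forall>t\<in>S. \<forall>i\<in>{..<n}. (gs i t - \<beta> t)/\<alpha> t \<le> g t)"
        unfolding A_def mx_def using S(1) ne by (auto simp: space_PiM Max_le_iff)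
      also have "\<dots> \<longleftrightarrow> (\<forall>i\<in>{..<n}. \<forall>t\<in>S. gs i t \<le> \<alpha> t * g t + \<beta> t)"
      proof -
        have "\<And>t i. t \<in> S \<Longrightarrow> (gs i t - \<beta> t)/\<alpha> t \<le> g t \<longleftrightarrow> gs i t \<le> \<alpha> t * g t + \<beta> t"
        proof -
          fix t i assume "t \<in> S"
          then have "\<alpha> t > 0" using \<alpha> S(1) by auto
          then show "(gs i t - \<beta> t)/\<alpha> t \<le> g t \<longleftrightarrow> gs i t \<le> \<alpha> t * g t + \<beta> t"
            by (simp add: pos_divide_le_eq algebra_simps)
        qed
        then show ?thesis by blast
      qed
      finally have "mx gs \<in> A g \<longleftrightarrow> (\<forall>i\<in>{..<n}. \<forall>t\<in>S. gs i t \<le> \<alpha> t * g t + \<beta> t)" . }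
    note key = this
    have spP: "space PP = PiE {..<n} (\<lambda>_. space P01)" unfolding PP_def by (simp add: space_PiM sm)
    show ?thesis
    proof (rule set_eqI)
      fix x
      show "x \<in> mx -` A g \<inter> space PP \<longleftrightarrow> x \<in> PiE {..<n} (\<lambda>_. A (\<lambda>t. \<alpha> t * g t + \<beta> t))"
      proof
        assume x: "x \<in> mx -` A g \<inter> space PP"
        then have "\<forall>i\<in>{..<n}. \<forall>t\<in>S. x i t \<le> \<alpha> t * g t + \<beta> t" using key by auto
        then show "x \<in> PiE {..<n} (\<lambda>_. A (\<lambda>t. \<alpha> t * g t + \<beta> t))"
          using x unfolding spP A_def by (auto simp: PiE_iff)
      next
        assume x: "x \<in> PiE {..<n} (\<lambda>_. A (\<lambda>t. \<alpha> t * g t + \<beta> t))"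
        then have xs: "x \<in> space PP" unfolding spP A_def by (auto simp: PiE_iff)
        have "\<forall>i\<in>{..<n}. \<forall>t\<in>S. x i t \<le> \<alpha> t * g t + \<beta> t" using x unfolding A_def by (auto simp: PiE_iff)
        then show "x \<in> mx -` A g \<inter> space PP" using key[OF xs] xs by auto
      qed
    qed
  qed
  also have "measure PP (PiE {..<n} (\<lambda>_. A (\<lambda>t. \<alpha> t * g t + \<beta> t))) = (\<Prod>i\<in>{..<n}. measure \<mu> (A (\<lambda>t. \<alpha> t * g t + \<beta> t)))"
    unfolding PP_def by (rule P.prob_times) (simp add: Asets \<mu>_def path_law_def)
  also have "\<dots> = (measure \<mu> (A (\<lambda>t. \<alpha> t * g t + \<beta> t)))^n" by simp
  finally show ?thesis unfolding muA .
qed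

lemma margin_meas:
  assumes "std_max_stable N \<eta>" "t \<in> {0..1}"
  shows "measure N {\<omega>\<in>space N. \<eta> \<omega> t \<le> x} = (if x \<le> 0 then exp x else 1)"
proof (cases "x \<le> 0")
  case True then show ?thesis using assms unfolding std_max_stable_def by auto
next
  case False
  have P: "prob_space N" using assms unfolding std_max_stable_def by auto
  have "\<forall>\<omega>\<in>space N. \<eta> \<omega> t \<le> 0" using assms unfolding std_max_stable_def by blast
  then have "{\<omega>\<in>space N. \<eta> \<omega> t \<le> x} = space N" using False by fastforce
  then show ?thesis using False prob_space.prob_space[OF P] by simp
qed

lemma exp_eq_pow_case:
  fixes y x :: real
  assumes "exp x = (if y \<le> 0 then exp y else 1) ^ n" "x < 0"
  shows "y \<le> 0 \<and> x = real n * y"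
proof -
  have "y \<le> 0" using assms by (cases "y \<le> 0") auto
  then have "exp x = exp (real n * y)" using assms by (simp add: exp_of_nat_mult)
  then show ?thesis using \<open>y \<le> 0\<close> by simp
qed

lemma alpha_beta:
  assumes sms: "std_max_stable N \<eta>" and n: "n \<ge> 1" and \<alpha>: "\<forall>t\<in>{0..1}. \<alpha> t > 0"
   and D: "distr (PiM {..<n} (\<lambda>_. path_law N \<eta>)) P01 (\<lambda>gs. \<lambda>t\<in>{0..1}. MAX i\<in>{..<n}. (gs i t - \<beta> t)/\<alpha> t) = path_law N \<eta>"
   and t: "t \<in> {0..1}"
  shows "\<alpha> t = 1 / real n \<and> \<beta> t = 0"
proof -
  have N: "prob_space N" and X: "cont_process N \<eta>" using sms unfolding std_max_stable_def by auto
  have key: "exp x = (if \<alpha> t * x + \<beta> t \<le> 0 then exp (\<alpha> t * x + \<beta> t) else 1) ^ n" if "x \<le> 0" for x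
  proof -
    have "measure N {\<omega>\<in>space N. \<forall>s\<in>{t}. \<eta> \<omega> s \<le> (\<lambda>_. x) s} =
      (measure N {\<omega>\<in>space N. \<forall>s\<in>{t}. \<eta> \<omega> s \<le> \<alpha> s * (\<lambda>_. x) s + \<beta> s})^n"
      by (rule prod_step[OF N X _ _ n \<alpha> D]) (use t in auto)
    then show ?thesis using margin_meas[OF sms t] that by simp
  qed
  have 1: "-1 = real n * (\<alpha> t * (-1) + \<beta> t)" using exp_eq_pow_case[OF key[of "-1"]] by linarith
  have 2: "-2 = real n * (\<alpha> t * (-2) + \<beta> t)" using exp_eq_pow_case[OF key[of "-2"]] by linarith
  have e1: "real n * \<alpha> t - real n * \<beta> t = 1" using 1 by (simp add: algebra_simps)
  have e2: "2 * (real n * \<alpha> t) - real n * \<beta> t = 2" using 2 by (simp add: algebra_simps)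
  have "real n * \<alpha> t = 1" using e1 e2 by linarith
  moreover have "real n * \<beta> t = 0" using e1 e2 by linarith
  ultimately show ?thesis using n by (auto simp: field_simps)
qed

lemma ms_scale:
  assumes sms: "std_max_stable N \<eta>" and S: "S \<subseteq> {0..1}" "countable S" and n: "n \<ge> 1"
  shows "measure N {\<omega>\<in>space N. \<forall>t\<in>S. \<eta> \<omega> t \<le> g t} = (measure N {\<omega>\<in>space N. \<forall>t\<in>S. \<eta> \<omega> t \<le> g t / real n})^n"
proof -
  have N: "prob_space N" and X: "cont_process N \<eta>" using sms unfolding std_max_stable_def by auto
  obtain \<alpha> \<beta> where \<alpha>: "\<forall>t\<in>{0..1}. \<alpha> t > 0"
   and D: "distr (PiM {..<n} (\<lambda>_. path_law N \<eta>)) P01 (\<lambda>gs. \<lambda>t\<in>{0..1}. MAX i\<in>{..<n}. (gs i t - \<beta> t)/\<alpha> t) = path_law N \<eta>"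
    using sms n unfolding std_max_stable_def by blast
  have ab: "\<And>t. t \<in> {0..1} \<Longrightarrow> \<alpha> t = 1 / real n \<and> \<beta> t = 0" using alpha_beta[OF sms n \<alpha> D] by blast
  have "measure N {\<omega>\<in>space N. \<forall>t\<in>S. \<eta> \<omega> t \<le> g t} = (measure N {\<omega>\<in>space N. \<forall>t\<in>S. \<eta> \<omega> t \<le> \<alpha> t * g t + \<beta> t})^n"
    by (rule prod_step[OF N X S n \<alpha> D])
  also have "{\<omega>\<in>space N. \<forall>t\<in>S. \<eta> \<omega> t \<le> \<alpha> t * g t + \<beta> t} = {\<omega>\<in>space N. \<forall>t\<in>S. \<eta> \<omega> t \<le> g t / real n}"
  proof (intro Collect_cong conj_cong refl ball_cong)
    fix \<omega> t assume "t \<in> S"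
    then have "\<alpha> t = 1 / real n \<and> \<beta> t = 0" using ab S(1) by blast
    then show "\<eta> \<omega> t \<le> \<alpha> t * g t + \<beta> t \<longleftrightarrow> \<eta> \<omega> t \<le> g t / real n" by simp
  qed
  finally show ?thesis .
qed

lemma cont_off_step: "cont_off {s} (\<lambda>t. if t \<le> s then a else b)"
  unfolding cont_off_def
proof (intro ballI)
  fix t assume t: "t \<in> {0..1} - {s}"
  have ev: "eventually (\<lambda>x. (if x \<le> s then a else b) = (if t \<le> s then a else b)) (nhds t)"
  proof -
    have d: "\<bar>s - t\<bar> > 0" using t by auto
    have "\<forall>y. dist y t < \<bar>s - t\<bar> \<longrightarrow> (if y \<le> s then a else b) = (if t \<le> s then a else b)"
      by (auto simp: dist_real_def abs_if split: if_splits)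
    then show ?thesis unfolding eventually_nhds_metric using d by blast
  qed
  have "isCont (\<lambda>x. if x \<le> s then a else b) t"
    by (subst isCont_cong[OF ev]) simp
  then show "continuous (at t within {0..1}) (\<lambda>t. if t \<le> s then a else b)"
    by (rule continuous_at_imp_continuous_at_within)
qed

lemma cont_off_map:
  assumes "cont_off F f" and h: "continuous_on UNIV h"
  shows "cont_off F (\<lambda>t. h (f t))"
  unfolding cont_off_def
proof
  fix t assume t: "t \<in> {0..1} - F"
  then have A: "continuous (at t within {0..1}) f" using assms unfolding cont_off_def by blast
  have B: "isCont h (f t)" using h continuous_on_eq_continuous_at open_UNIV by blast
  show "continuous (at t within {0..1}) (\<lambda>t. h (f t))"
    by (rule continuous_within_compose3[OF B A])
qed

lemma cont_off_diff: "cont_off F f \<Longrightarrow> cont_off F (\<lambda>t. f t - c)"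
  by (rule cont_off_map[where h="\<lambda>x. x - c"], assumption, rule continuous_on_diff[OF continuous_on_id continuous_on_const])
lemma cont_off_mult: "cont_off F f \<Longrightarrow> cont_off F (\<lambda>t. f t * c)"
  by (rule cont_off_map[where h="\<lambda>x. x * c"], assumption, rule continuous_on_mult[OF continuous_on_id continuous_on_const])
lemma cont_off_divide: "cont_off F f \<Longrightarrow> cont_off F (\<lambda>t. f t / c)"
  using cont_off_mult[of F f "inverse c"] by (simp add: divide_inverse)
lemma cont_off_minplus: "cont_off F f \<Longrightarrow> cont_off F (\<lambda>t. min (f t + c) 0)"
  by (rule cont_off_map[where h="\<lambda>x. min (x + c) 0"], assumption, rule continuous_on_min[OF continuous_on_add[OF continuous_on_id continuous_on_const] continuous_on_const])
lemma cont_off_const: "cont_off F (\<lambda>t. c)"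
  unfolding cont_off_def by simp




context
  fixes N :: "'b measure" and \<eta> :: "'b \<Rightarrow> real \<Rightarrow> real"
  assumes sms: "std_max_stable N \<eta>"
begin

lemma N_prob: "prob_space N" using sms unfolding std_max_stable_def by auto
lemma eta_cp: "cont_process N \<eta>" using sms unfolding std_max_stable_def by auto
lemma eta_le0: "\<omega> \<in> space N \<Longrightarrow> t \<in> {0..1} \<Longrightarrow> \<eta> \<omega> t \<le> 0" using sms unfolding std_max_stable_def by auto
lemma eta_cont: "\<omega> \<in> space N \<Longrightarrow> continuous_on {0..1} (\<eta> \<omega>)" using eta_cp unfolding cont_process_def by auto

interpretation NP: prob_space N by (rule N_prob)

lemma ms_root:
  assumes S: "S \<subseteq> {0..1}" "countable S" and k: "k \<ge> 1"
  shows "measure N {\<omega>\<in>space N. \<forall>t\<in>S. \<eta> \<omega> t \<le> g t / real k} = root k (measure N {\<omega>\<in>space N. \<forall>t\<in>S. \<eta> \<omega> t \<le> g t})"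
proof -
  have "measure N {\<omega>\<in>space N. \<forall>t\<in>S. \<eta> \<omega> t \<le> g t} = (measure N {\<omega>\<in>space N. \<forall>t\<in>S. \<eta> \<omega> t \<le> g t / real k})^k"
    by (rule ms_scale[OF sms S k])
  then show ?thesis using k by (simp add: real_root_power_cancel)
qed

definition U :: "nat \<Rightarrow> real \<Rightarrow> 'b set" where
  "U j s = {\<omega>\<in>space N. \<forall>t\<in>{0..s}. \<eta> \<omega> t \<le> -1/real (Suc j)}"

definition Z :: "real \<Rightarrow> 'b set" where
  "Z s = {\<omega>\<in>space N. \<exists>t\<in>{0..s}. \<eta> \<omega> t = 0}"

lemma U_eq:
  assumes s: "s \<in> {0..1}"
  shows "U j s = {\<omega>\<in>space N. \<forall>t\<in>SF {s}. \<eta> \<omega> t \<le> (\<lambda>t. if t \<le> s then -1/real (Suc j) else 0) t}"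
proof -
  define c where "c = -1/real (Suc j)"
  define gj where "gj = (\<lambda>t::real. if t \<le> s then c else 0)"
  have co: "cont_off {s} gj" unfolding gj_def by (rule cont_off_step)
  { fix \<omega> assume \<omega>: "\<omega> \<in> space N"
    have "(\<forall>t\<in>{0..s}. \<eta> \<omega> t \<le> c) \<longleftrightarrow> (\<forall>t\<in>{0..1}. \<eta> \<omega> t \<le> gj t)"
    proof
      assume H: "\<forall>t\<in>{0..s}. \<eta> \<omega> t \<le> c"
      show "\<forall>t\<in>{0..1}. \<eta> \<omega> t \<le> gj t"
      proof
        fix t :: real assume t: "t \<in> {0..1}"
        show "\<eta> \<omega> t \<le> gj t"
        proof (cases "t \<le> s")
          case True
          then have "t \<in> {0..s}" using t by simp
          then have "\<eta> \<omega> t \<le> c" using H by blast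
          then show ?thesis using True unfolding gj_def by simp
        next
          case False then show ?thesis using eta_le0[OF \<omega> t] unfolding gj_def by simp
        qed
      qed
    next
      assume H: "\<forall>t\<in>{0..1}. \<eta> \<omega> t \<le> gj t"
      show "\<forall>t\<in>{0..s}. \<eta> \<omega> t \<le> c"
      proof
        fix t :: real assume t: "t \<in> {0..s}"
        then have "t \<in> {0..1}" using s by auto
        then have "\<eta> \<omega> t \<le> gj t" using H by blast
        moreover have "gj t = c" using t unfolding gj_def by simp
        ultimately show "\<eta> \<omega> t \<le> c" by simp
      qed
    qed
    also have "\<dots> \<longleftrightarrow> (\<forall>t\<in>SF {s}. \<eta> \<omega> t \<le> gj t)" by (rule le_iff_rat[OF eta_cont[OF \<omega>] co])
    finally have "(\<forall>t\<in>{0..s}. \<eta> \<omega> t \<le> c) \<longleftrightarrow> (\<forall>t\<in>SF {s}. \<eta> \<omega> t \<le> gj t)" . }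
  then show ?thesis unfolding U_def gj_def c_def by blast
qed

lemma U_sets: "s \<in> {0..1} \<Longrightarrow> U j s \<in> sets N"
  unfolding U_eq by (rule meas_le_S[OF eta_cp SF_sub countable_SF]) simp

lemma U_meas:
  assumes s: "s \<in> {0..1}"
  shows "measure N (U j s) = root (Suc j) (measure N (U 0 s))"
proof -
  define g where "g = (\<lambda>t::real. if t \<le> s then -1 else (0::real))"
  have e: "\<And>k. U k s = {\<omega>\<in>space N. \<forall>t\<in>SF {s}. \<eta> \<omega> t \<le> g t / real (Suc k)}"
    unfolding U_eq[OF s] g_def by (intro Collect_cong ball_cong refl) (auto simp del: of_nat_Suc)
  have "measure N (U j s) = root (Suc j) (measure N {\<omega>\<in>space N. \<forall>t\<in>SF {s}. \<eta> \<omega> t \<le> g t})"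
    unfolding e by (rule ms_root[OF SF_sub countable_SF]) auto
  moreover have "measure N (U 0 s) = measure N {\<omega>\<in>space N. \<forall>t\<in>SF {s}. \<eta> \<omega> t \<le> g t}"
    unfolding e by simp
  ultimately show ?thesis by simp
qed

lemma U_inc: "incseq (\<lambda>j. U j s)"
proof (rule incseq_SucI, rule subsetI)
  fix j \<omega>
  assume "\<omega> \<in> U j s"
  then have \<omega>: "\<omega> \<in> space N" "\<forall>t\<in>{0..s}. \<eta> \<omega> t \<le> -1/real (Suc j)" unfolding U_def by auto
  have le: "-1/real (Suc j) \<le> -1/real (Suc (Suc j))" by (simp add: field_simps)
  have "\<forall>t\<in>{0..s}. \<eta> \<omega> t \<le> -1/real (Suc (Suc j))"
  proof
    fix t assume "t \<in> {0..s}"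
    then have "\<eta> \<omega> t \<le> -1/real (Suc j)" using \<omega> by blast
    then show "\<eta> \<omega> t \<le> -1/real (Suc (Suc j))" using le by linarith
  qed
  then show "\<omega> \<in> U (Suc j) s" using \<omega> unfolding U_def by blast
qed

lemma U_union:
  assumes s: "s \<in> {0..1}"
  shows "(\<Union>j. U j s) = space N - Z s"
proof
  show "(\<Union>j. U j s) \<subseteq> space N - Z s"
  proof
    fix \<omega> assume "\<omega> \<in> (\<Union>j. U j s)"
    then obtain j where j: "\<omega> \<in> U j s" by auto
    then have \<omega>: "\<omega> \<in> space N" "\<forall>t\<in>{0..s}. \<eta> \<omega> t \<le> -1/real (Suc j)" unfolding U_def by auto
    have neg: "-1/real (Suc j) < 0" by simp
    have "\<forall>t\<in>{0..s}. \<eta> \<omega> t \<noteq> 0"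
    proof
      fix t assume "t \<in> {0..s}"
      then have "\<eta> \<omega> t \<le> -1/real (Suc j)" using \<omega> by blast
      then show "\<eta> \<omega> t \<noteq> 0" using neg by linarith
    qed
    then show "\<omega> \<in> space N - Z s" using \<omega> unfolding Z_def by blast
  qed
next
  show "space N - Z s \<subseteq> (\<Union>j. U j s)"
  proof
    fix \<omega> assume \<omega>: "\<omega> \<in> space N - Z s"
    have cs: "continuous_on {0..s} (\<eta> \<omega>)"
      using eta_cont[of \<omega>] \<omega> s by (auto intro: continuous_on_subset)
    have ne: "{0..s} \<noteq> {}" using s by auto
    obtain u where u: "u \<in> {0..s}" "\<forall>t\<in>{0..s}. \<eta> \<omega> t \<le> \<eta> \<omega> u"
      using continuous_attains_sup[OF compact_Icc ne cs] by blast
    have "u \<in> {0..1}" using u s by auto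
    then have "\<eta> \<omega> u \<le> 0" using eta_le0[of \<omega> u] \<omega> by blast
    moreover have "\<eta> \<omega> u \<noteq> 0" using \<omega> u unfolding Z_def by blast
    ultimately have neg: "\<eta> \<omega> u < 0" by simp
    obtain j :: nat where j: "inverse (real (Suc j)) < -\<eta> \<omega> u"
      using reals_Archimedean[of "-\<eta> \<omega> u"] neg by auto
    then have j': "\<eta> \<omega> u \<le> -1/real (Suc j)" by (simp add: inverse_eq_divide)
    have "\<forall>t\<in>{0..s}. \<eta> \<omega> t \<le> -1/real (Suc j)"
    proof
      fix t assume "t \<in> {0..s}"
      then have "\<eta> \<omega> t \<le> \<eta> \<omega> u" using u by blast
      then show "\<eta> \<omega> t \<le> -1/real (Suc j)" using j' by linarith
    qed
    then have "\<omega> \<in> U j s" using \<omega> unfolding U_def by blast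
    then show "\<omega> \<in> (\<Union>j. U j s)" by blast
  qed
qed

lemma Z_sets: "s \<in> {0..1} \<Longrightarrow> Z s \<in> sets N"
proof -
  assume s: "s \<in> {0..1}"
  have "Z s = space N - (\<Union>j. U j s)" using U_union[OF s] unfolding Z_def by auto
  then show ?thesis using U_sets[OF s] by auto
qed

lemma U_lim: "s \<in> {0..1} \<Longrightarrow> (\<lambda>j. measure N (U j s)) \<longlonglongrightarrow> measure N (space N - Z s)"
  using NP.finite_Lim_measure_incseq[of "\<lambda>j. U j s"] U_sets U_inc U_union by auto

lemma dichotomy:
  assumes s: "s \<in> {0..1}"
  shows "measure N (Z s) = 0 \<or> measure N (Z s) = 1"
proof -
  define c where "c = measure N (U 0 s)"
  have lim: "(\<lambda>j. root (Suc j) c) \<longlonglongrightarrow> measure N (space N - Z s)"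
  proof -
    have "(\<lambda>j. measure N (U j s)) = (\<lambda>j. root (Suc j) c)"
      by (rule ext) (rule U_meas[OF s, folded c_def])
    then show ?thesis using U_lim[OF s] by simp
  qed
  have comp: "measure N (space N - Z s) = 1 - measure N (Z s)" by (rule NP.prob_compl[OF Z_sets[OF s]])
  show ?thesis
  proof (cases "c = 0")
    case True
    then have "(\<lambda>j. root (Suc j) c) \<longlonglongrightarrow> 0" by simp
    then have "measure N (space N - Z s) = 0" using lim LIMSEQ_unique by blast
    then show ?thesis using comp by simp
  next
    case False
    then have "c > 0" unfolding c_def using measure_nonneg[of N] by (simp add: order_less_le)
    then have "(\<lambda>j. root (Suc j) c) \<longlonglongrightarrow> 1" using LIMSEQ_root_const LIMSEQ_Suc by blast
    then have "measure N (space N - Z s) = 1" using lim LIMSEQ_unique by blast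
    then show ?thesis using comp by simp
  qed
qed


lemma Z_mono: "s \<le> s' \<Longrightarrow> Z s \<subseteq> Z s'"
  unfolding Z_def by auto

lemma no_zero: "measure N (Z 1) = 0"
proof (rule ccontr)
  assume H: "measure N (Z 1) \<noteq> 0"
  then have Z1: "measure N (Z 1) = 1" using dichotomy[of 1] by auto
  define T where "T = {s\<in>{0..1}. measure N (Z s) = 1}"
  have T1: "1 \<in> T" using Z1 unfolding T_def by auto
  have Tne: "T \<noteq> {}" using T1 by auto
  have Tbdd: "bdd_below T" unfolding T_def by (rule bdd_belowI[of _ 0]) auto
  define c where "c = Inf T"
  have c0: "0 \<le> c" unfolding c_def by (rule cInf_greatest[OF Tne]) (auto simp: T_def)
  have c1: "c \<le> 1" unfolding c_def by (rule cInf_lower[OF T1 Tbdd])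
  have above: "measure N (Z s) = 1" if "c < s" "s \<le> 1" for s
  proof -
    have "Inf T < s" using that unfolding c_def by simp
    then obtain s' where s': "s' \<in> T" "s' < s" using cInf_less_iff[OF Tne Tbdd] by blast
    have sin: "s \<in> {0..1}" using that c0 by simp
    have "measure N (Z s') \<le> measure N (Z s)"
      by (rule NP.finite_measure_mono[OF Z_mono Z_sets[OF sin]]) (use s' in simp)
    moreover have "measure N (Z s') = 1" using s' unfolding T_def by auto
    moreover have "measure N (Z s) \<le> 1" by simp
    ultimately show ?thesis by linarith
  qed
  have below: "measure N (Z s) = 0" if "0 \<le> s" "s < c" for s
  proof -
    have "s \<notin> T"
    proof
      assume "s \<in> T"
      then have "c \<le> s" unfolding c_def by (rule cInf_lower[OF _ Tbdd])
      then show False using that(2) by simp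
    qed
    then show ?thesis using dichotomy[of s] that c1 unfolding T_def by auto
  qed
  have AEc: "AE \<omega> in N. \<omega> \<in> Z c"
  proof (cases "c \<in> T")
    case True then show ?thesis unfolding T_def by (intro NP.AE_prob_1) auto
  next
    case False
    then have cl1: "c < 1" using T1 c1 by (cases "c = 1") auto
    define sk where "sk k = c + (1 - c) / real (Suc k)" for k
    have sk: "c < sk k" "sk k \<le> 1" for k
    proof -
      show "c < sk k" using cl1 unfolding sk_def by simp
      have "(1 - c) / real (Suc k) \<le> 1 - c" using cl1 by (simp add: divide_le_eq)
      then show "sk k \<le> 1" unfolding sk_def by simp
    qed
    have "AE \<omega> in N. \<forall>k. \<omega> \<in> Z (sk k)"
      unfolding AE_all_countable using above sk by (auto intro!: NP.AE_prob_1)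
    then show ?thesis
    proof (rule eventually_mono)
      fix \<omega> assume A: "\<forall>k. \<omega> \<in> Z (sk k)"
      then have \<omega>: "\<omega> \<in> space N" unfolding Z_def by auto
      define Zr where "Zr = {t\<in>{0..1}. \<eta> \<omega> t = 0}"
      have clZ: "closed Zr" unfolding Zr_def
        by (rule continuous_closed_preimage_constant[OF eta_cont[OF \<omega>]]) simp
      have bZ: "bdd_below Zr" unfolding Zr_def by (rule bdd_belowI[of _ 0]) auto
      have tk: "\<exists>t\<in>Zr. t \<le> sk k" for k
        using A[rule_format, of k] sk[of k] unfolding Z_def Zr_def by auto
      then have neZ: "Zr \<noteq> {}" by blast
      define i where "i = Inf Zr"
      have iZ: "i \<in> Zr" unfolding i_def by (rule closed_contains_Inf[OF neZ bZ clZ])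
      have ik: "i \<le> sk k" for k
      proof -
        obtain t where "t \<in> Zr" "t \<le> sk k" using tk by blast
        then show ?thesis unfolding i_def using cInf_lower[OF _ bZ] by force
      qed
      have "i \<le> c"
      proof (rule ccontr)
        assume "\<not> i \<le> c"
        then have pos: "(i - c) / (1 - c) > 0" using cl1 by simp
        obtain k :: nat where k: "inverse (real (Suc k)) < (i - c) / (1 - c)"
          using reals_Archimedean[OF pos] by auto
        then have "(1 - c) / real (Suc k) < i - c" using cl1
          by (simp add: inverse_eq_divide field_simps)
        then have "sk k < i" unfolding sk_def by simp
        then show False using ik[of k] by simp
      qed
      then show "\<omega> \<in> Z c" using iZ \<omega> unfolding Zr_def Z_def by auto
    qed
  qed
  define sb where "sb k = c - c / real (Suc (Suc k))" for k
  have AEb: "AE \<omega> in N. \<forall>k. \<omega> \<notin> Z (sb k)" if cpos: "c > 0"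
    unfolding AE_all_countable
  proof
    fix k
    have "c / real (Suc (Suc k)) \<le> c" using cpos by (simp add: divide_le_eq)
    moreover have "c / real (Suc (Suc k)) > 0" using cpos by simp
    ultimately have "0 \<le> sb k" "sb k < c" unfolding sb_def by auto
    then have m0: "measure N (Z (sb k)) = 0" by (rule below)
    have "sb k \<in> {0..1}" using \<open>0 \<le> sb k\<close> \<open>sb k < c\<close> c1 by auto
    then have "Z (sb k) \<in> null_sets N"
      using m0 Z_sets by (auto simp: null_sets_def NP.emeasure_eq_measure)
    then show "AE \<omega> in N. \<omega> \<notin> Z (sb k)" by (rule AE_not_in)
  qed
  have AEeq: "AE \<omega> in N. \<eta> \<omega> c = 0"
  proof (cases "c = 0")
    case True
    show ?thesis using AEc by (rule eventually_mono) (auto simp: Z_def True)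
  next
    case False
    then have cpos: "c > 0" using c0 by simp
    show ?thesis using eventually_conj[OF AEc AEb[OF cpos]]
    proof (rule eventually_mono)
      fix \<omega> assume A: "\<omega> \<in> Z c \<and> (\<forall>k. \<omega> \<notin> Z (sb k))"
      then obtain t where t: "t \<in> {0..c}" "\<eta> \<omega> t = 0" "\<omega> \<in> space N" unfolding Z_def by auto
      have "t = c"
      proof (rule ccontr)
        assume "t \<noteq> c"
        then have pos: "(c - t) / c > 0" using t cpos by simp
        obtain k :: nat where k: "inverse (real (Suc k)) < (c - t) / c"
          using reals_Archimedean[OF pos] by auto
        have "inverse (real (Suc (Suc k))) \<le> inverse (real (Suc k))" by (simp add: field_simps)
        then have "inverse (real (Suc (Suc k))) < (c - t) / c" using k by linarith
        then have "c / real (Suc (Suc k)) < c - t" using cpos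
          by (simp add: inverse_eq_divide field_simps)
        then have "t \<le> sb k" unfolding sb_def by simp
        then have "\<omega> \<in> Z (sb k)" using t unfolding Z_def by auto
        then show False using A by blast
      qed
      then show "\<eta> \<omega> c = 0" using t by simp
    qed
  qed
  have "measure N {\<omega>\<in>space N. \<eta> \<omega> c \<le> -1} = 0"
    by (rule NP.prob_eq_0_AE) (use AEeq in \<open>rule eventually_mono\<close>, simp)
  moreover have "measure N {\<omega>\<in>space N. \<eta> \<omega> c \<le> -1} = exp (-1)"
    using margin_meas[OF sms, of c "-1"] c0 c1 by simp
  ultimately show False by simp
qed

lemma all_neg: "measure N {\<omega>\<in>space N. \<forall>t\<in>{0..1}. \<eta> \<omega> t < 0} = 1"
proof -
  have "{\<omega>\<in>space N. \<forall>t\<in>{0..1}. \<eta> \<omega> t < 0} = space N - Z 1"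
  proof (rule set_eqI)
    fix \<omega>
    show "\<omega> \<in> {\<omega>\<in>space N. \<forall>t\<in>{0..1}. \<eta> \<omega> t < 0} \<longleftrightarrow> \<omega> \<in> space N - Z 1"
    proof (cases "\<omega> \<in> space N")
      case True
      have "(\<forall>t\<in>{0..1}. \<eta> \<omega> t < 0) \<longleftrightarrow> (\<forall>t\<in>{0..1}. \<eta> \<omega> t \<noteq> 0)"
      proof (intro iffI ballI)
        fix t :: real assume "\<forall>t\<in>{0..1}. \<eta> \<omega> t < 0" "t \<in> {0..1}"
        then have "\<eta> \<omega> t < 0" by blast
        then show "\<eta> \<omega> t \<noteq> 0" by simp
      next
        fix t :: real assume "\<forall>t\<in>{0..1}. \<eta> \<omega> t \<noteq> 0" and t: "t \<in> {0..1}"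
        then have "\<eta> \<omega> t \<noteq> 0" by blast
        moreover have "\<eta> \<omega> t \<le> 0" using eta_le0[OF True t] .
        ultimately show "\<eta> \<omega> t < 0" by simp
      qed
      then show ?thesis using True unfolding Z_def by blast
    next
      case False then show ?thesis by blast
    qed
  qed
  also have "measure N \<dots> = 1 - measure N (Z 1)" by (rule NP.prob_compl[OF Z_sets]) simp
  finally show ?thesis using no_zero by simp
qed

lemma U1_lim: "(\<lambda>j. measure N (U j 1)) \<longlonglongrightarrow> 1"
proof -
  have "measure N (space N - Z 1) = 1 - measure N (Z 1)" by (rule NP.prob_compl[OF Z_sets]) simp
  then show ?thesis using U_lim[of 1] no_zero by simp
qed


lemma H_SF:
  assumes "cont_off F g"
  shows "{\<omega>\<in>space N. \<forall>t\<in>{0..1}. \<eta> \<omega> t \<le> g t} = {\<omega>\<in>space N. \<forall>t\<in>SF F. \<eta> \<omega> t \<le> g t}"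
  using le_iff_rat[OF eta_cont assms] by blast

lemma meas_int_lower:
  assumes "A \<in> sets N" "B \<in> sets N"
  shows "measure N A - (1 - measure N B) \<le> measure N (A \<inter> B)"
proof -
  have "measure N A = measure N ((A \<inter> B) \<union> (A - B))" by (metis Int_Diff_Un)
  also have "\<dots> = measure N (A \<inter> B) + measure N (A - B)"
    by (rule NP.finite_measure_Union) (use assms in auto)
  also have "measure N (A - B) \<le> measure N (space N - B)"
    by (rule NP.finite_measure_mono) (use assms sets.sets_into_space in auto)
  also have "measure N (space N - B) = 1 - measure N B" by (rule NP.prob_compl[OF assms(2)])
  finally show ?thesis by simp
qed

lemma H_scale:
  assumes F: "finite F" and f: "cont_off F f" and k: "k \<ge> 1"
  shows "measure N {\<omega>\<in>space N. \<forall>t\<in>{0..1}. \<eta> \<omega> t \<le> f t * ((real k + 1) / real k)} =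
    measure N {\<omega>\<in>space N. \<forall>t\<in>{0..1}. \<eta> \<omega> t \<le> f t} * root k (measure N {\<omega>\<in>space N. \<forall>t\<in>{0..1}. \<eta> \<omega> t \<le> f t})"
proof -
  let ?S = "SF F"
  have S: "?S \<subseteq> {0..1}" "countable ?S" using SF_sub countable_SF[OF F] by auto
  define a where "a = measure N {\<omega>\<in>space N. \<forall>t\<in>?S. \<eta> \<omega> t \<le> f t}"
  have qf: "cont_off F (\<lambda>t. f t * ((real k + 1) / real k))" by (rule cont_off_mult[OF f])
  have "measure N {\<omega>\<in>space N. \<forall>t\<in>?S. \<eta> \<omega> t \<le> f t * ((real k + 1) / real k)} =
     (measure N {\<omega>\<in>space N. \<forall>t\<in>?S. \<eta> \<omega> t \<le> f t * ((real k + 1) / real k) / real (Suc k)}) ^ (Suc k)"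
    by (rule ms_scale[OF sms S]) simp
  also have "(\<lambda>t. f t * ((real k + 1) / real k) / real (Suc k)) = (\<lambda>t. f t / real k)"
  proof (rule ext)
    fix x
    have kk': "real (Suc k) \<noteq> 0" by simp
    have "f x * ((real k + 1) / real k) / real (Suc k) = f x * (((real k + 1) / real k) / real (Suc k))" by simp
    also have "((real k + 1) / real k) / real (Suc k) = 1 / real k"
    proof -
      have kp: "0 < real k" using k by simp
      have "0 < real k + real k * real k" using kp by (intro add_pos_pos mult_pos_pos)
      then have "real k + real k * real k \<noteq> 0" by simp
      then show ?thesis using kp by (simp add: field_simps)
    qed
    finally show "f x * ((real k + 1) / real k) / real (Suc k) = f x / real k" by simp
  qed
  also have "measure N {\<omega>\<in>space N. \<forall>t\<in>?S. \<eta> \<omega> t \<le> f t / real k} = root k a"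
    unfolding a_def by (rule ms_root[OF S k])
  also have "(root k a) ^ Suc k = a * root k a"
  proof -
    have "a \<ge> 0" unfolding a_def by simp
    then have "(root k a) ^ k = a" using k by simp
    then show ?thesis by simp
  qed
  finally show ?thesis unfolding H_SF[OF qf] H_SF[OF f] a_def .
qed

lemma H_lim_minus:
  assumes F: "finite F" and f: "cont_off F f" and fneg: "\<forall>t\<in>{0..1}. f t \<le> 0"
  shows "(\<lambda>j. measure N {\<omega>\<in>space N. \<forall>t\<in>{0..1}. \<eta> \<omega> t \<le> f t - 1/real (Suc j)}) \<longlonglongrightarrow>
    measure N {\<omega>\<in>space N. \<forall>t\<in>{0..1}. \<eta> \<omega> t \<le> f t}"
proof -
  define Hs where "Hs g = {\<omega>\<in>space N. \<forall>t\<in>{0..1}. \<eta> \<omega> t \<le> g t}" for g :: "real \<Rightarrow> real"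
  define a where "a = measure N (Hs f)"
  define X where "X j = measure N (Hs (\<lambda>t. f t - 1/real (Suc j)))" for j
  have Hs_sets: "cont_off F g \<Longrightarrow> Hs g \<in> sets N" for g unfolding Hs_def by (rule meas_le[OF eta_cp F])
  have Hs_mono: "(\<And>t. t \<in> {0..1} \<Longrightarrow> g t \<le> h t) \<Longrightarrow> Hs g \<subseteq> Hs h" for g h
    unfolding Hs_def by (auto intro: order_trans)
  have Xa: "X j \<le> a" for j
    unfolding X_def a_def by (rule NP.finite_measure_mono[OF Hs_mono Hs_sets[OF f]]) simp
  have Xmono: "X j \<le> X j'" if "j \<le> j'" for j j'
  proof -
    have "1/real (Suc j') \<le> 1/real (Suc j)" using that by (simp add: frac_le)
    then show ?thesis unfolding X_def
      by (intro NP.finite_measure_mono[OF Hs_mono Hs_sets[OF cont_off_diff[OF f]]]) auto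
  qed
  have key: "\<exists>j. a - e \<le> X j" if e: "e > 0" for e
  proof (cases "a = 0")
    case True
    have "X 0 \<ge> 0" unfolding X_def by simp
    then show ?thesis using True e by (intro exI[of _ 0]) simp
  next
    case False
    then have apos: "a > 0" unfolding a_def by (simp add: order_less_le)
    have "(\<lambda>k. root k a) \<longlonglongrightarrow> 1" by (rule LIMSEQ_root_const[OF apos])
    then have "eventually (\<lambda>k. dist (root k a) 1 < e/2) sequentially" by (rule tendstoD) (use e in simp)
    then obtain k0 where k0: "\<forall>k\<ge>k0. dist (root k a) 1 < e/2" by (auto simp: eventually_sequentially)
    define k where "k = Suc k0"
    have k1: "k \<ge> 1" unfolding k_def by simp
    have "\<bar>root k a - 1\<bar> < e/2" using k0[rule_format, of k] unfolding k_def by (simp add: dist_real_def)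
    then have rk: "root k a \<ge> 1 - e/2" using abs_less_iff[of "root k a - 1" "e/2"] by linarith
    have a1: "a \<le> 1" unfolding a_def by simp
    have "a * root k a \<ge> a * (1 - e/2)" using rk apos by (intro mult_left_mono) auto
    moreover have "a * (1 - e/2) \<ge> a - e/2" using a1 apos e by (simp add: algebra_simps)
    ultimately have ark: "a * root k a \<ge> a - e/2" by linarith
    have "eventually (\<lambda>j. dist (measure N (U j 1)) 1 < e/2) sequentially"
      by (rule tendstoD[OF U1_lim]) (use e in simp)
    then obtain j0 where j0: "dist (measure N (U j0 1)) 1 < e/2" by (auto simp: eventually_sequentially)
    then have Uj0: "measure N (U j0 1) \<ge> 1 - e/2" by (auto simp: dist_real_def)
    define \<delta> where "\<delta> = 1 / real (Suc j0)"
    have dpos: "\<delta> > 0" unfolding \<delta>_def by simp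
    have pos2: "\<delta> / (2 * real k) > 0" using dpos k1 by simp
    obtain j :: nat where j: "inverse (real (Suc j)) < \<delta> / (2 * real k)"
      using reals_Archimedean[OF pos2] by auto
    then have jle: "1 / real (Suc j) \<le> \<delta> / (2 * real k)" by (simp add: inverse_eq_divide)
    have kd: "\<delta> / (2 * real k) \<le> \<delta> / 2"
    proof -
      have "\<delta> / (2 * real k) \<le> \<delta> / (2 * 1)" by (rule divide_left_mono) (use k1 dpos in auto)
      then show ?thesis by simp
    qed
    define qf where "qf = (\<lambda>t. f t * ((real k + 1) / real k))"
    have incl: "Hs qf \<inter> U j0 1 \<subseteq> Hs (\<lambda>t. f t - 1/real (Suc j))"
    proof
      fix \<omega> assume A: "\<omega> \<in> Hs qf \<inter> U j0 1"
      then have \<omega>: "\<omega> \<in> space N" and q: "\<forall>t\<in>{0..1}. \<eta> \<omega> t \<le> qf t"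
        and u: "\<forall>t\<in>{0..1}. \<eta> \<omega> t \<le> -\<delta>" unfolding Hs_def U_def \<delta>_def by auto
      have "\<eta> \<omega> t \<le> f t - 1/real (Suc j)" if t: "t \<in> {0..1}" for t
      proof (cases "f t \<ge> -\<delta>/2")
        case True
        have "\<eta> \<omega> t \<le> -\<delta>" using u t by blast
        then show ?thesis using True jle kd by linarith
      next
        case False
        have "\<eta> \<omega> t \<le> qf t" using q t by blast
        also have "qf t = f t + f t / real k" unfolding qf_def using k1 by (simp add: field_simps)
        also have "f t / real k \<le> -(\<delta>/2) / real k" using False k1 by (intro divide_right_mono) auto
        also have "-(\<delta>/2) / real k = - (\<delta> / (2 * real k))" by simp
        finally show ?thesis using jle by linarith
      qed
      then show "\<omega> \<in> Hs (\<lambda>t. f t - 1/real (Suc j))" using \<omega> unfolding Hs_def by blast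
    qed
    have qfc: "cont_off F qf" unfolding qf_def by (rule cont_off_mult[OF f])
    have "measure N (Hs qf) - (1 - measure N (U j0 1)) \<le> measure N (Hs qf \<inter> U j0 1)"
      by (rule meas_int_lower[OF Hs_sets[OF qfc] U_sets]) simp
    also have "\<dots> \<le> X j" unfolding X_def
      by (rule NP.finite_measure_mono[OF incl Hs_sets[OF cont_off_diff[OF f]]])
    finally have "measure N (Hs qf) - (1 - measure N (U j0 1)) \<le> X j" .
    moreover have "measure N (Hs qf) = a * root k a"
      unfolding Hs_def qf_def a_def by (rule H_scale[OF F f k1])
    ultimately have "X j \<ge> a - e" using ark Uj0 by linarith
    then show ?thesis by blast
  qed
  show ?thesis unfolding X_def[symmetric] Hs_def[symmetric] a_def[symmetric]
  proof (rule LIMSEQ_I)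
    fix r :: real assume r: "r > 0"
    obtain j0 where j0: "a - r/2 \<le> X j0" using key[of "r/2"] r by auto
    show "\<exists>no. \<forall>n\<ge>no. norm (X n - a) < r"
    proof (intro exI allI impI)
      fix n assume "j0 \<le> n"
      then have "X j0 \<le> X n" by (rule Xmono)
      then show "norm (X n - a) < r" using j0 Xa[of n] r by auto
    qed
  qed
qed

lemma G_eq_H:
  assumes F: "finite F" and f: "cont_off F f" and fneg: "\<forall>t\<in>{0..1}. f t \<le> 0"
  shows "measure N {\<omega>\<in>space N. \<forall>t\<in>{0..1}. \<eta> \<omega> t < f t} = measure N {\<omega>\<in>space N. \<forall>t\<in>{0..1}. \<eta> \<omega> t \<le> f t}"
proof (rule antisym)
  show "measure N {\<omega>\<in>space N. \<forall>t\<in>{0..1}. \<eta> \<omega> t < f t} \<le> measure N {\<omega>\<in>space N. \<forall>t\<in>{0..1}. \<eta> \<omega> t \<le> f t}"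
    by (rule NP.finite_measure_mono[OF _ meas_le[OF eta_cp F f]]) auto
  show "measure N {\<omega>\<in>space N. \<forall>t\<in>{0..1}. \<eta> \<omega> t \<le> f t} \<le> measure N {\<omega>\<in>space N. \<forall>t\<in>{0..1}. \<eta> \<omega> t < f t}"
  proof -
    have all: "measure N {\<omega>\<in>space N. \<forall>t\<in>{0..1}. \<eta> \<omega> t \<le> f t - 1/real (Suc j)} \<le> measure N {\<omega>\<in>space N. \<forall>t\<in>{0..1}. \<eta> \<omega> t < f t}" for j :: nat
    proof -
    have "{\<omega>\<in>space N. \<forall>t\<in>{0..1}. \<eta> \<omega> t \<le> f t - 1/real (Suc j)} \<subseteq> {\<omega>\<in>space N. \<forall>t\<in>{0..1}. \<eta> \<omega> t < f t}"
    proof (rule subsetI)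
      fix \<omega> assume A: "\<omega> \<in> {\<omega>\<in>space N. \<forall>t\<in>{0..1}. \<eta> \<omega> t \<le> f t - 1/real (Suc j)}"
      then have \<omega>: "\<omega> \<in> space N" and B: "\<forall>t\<in>{0..1}. \<eta> \<omega> t \<le> f t - 1/real (Suc j)" by auto
      have p: "0 < 1/real (Suc j)" by simp
      have "\<forall>t\<in>{0..1}. \<eta> \<omega> t < f t"
      proof
        fix t :: real assume t: "t \<in> {0..1}"
        have "\<eta> \<omega> t \<le> f t - 1/real (Suc j)" using B t by blast
        then show "\<eta> \<omega> t < f t" using p by linarith
      qed
      then show "\<omega> \<in> {\<omega>\<in>space N. \<forall>t\<in>{0..1}. \<eta> \<omega> t < f t}" using \<omega> by blast
    qed
    then show "measure N {\<omega>\<in>space N. \<forall>t\<in>{0..1}. \<eta> \<omega> t \<le> f t - 1/real (Suc j)} \<le> measure N {\<omega>\<in>space N. \<forall>t\<in>{0..1}. \<eta> \<omega> t < f t}"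
      by (rule NP.finite_measure_mono[OF _ meas_lt[OF eta_cp F f]])
    qed
    show ?thesis by (rule LIMSEQ_le_const2[OF H_lim_minus[OF F f fneg]]) (use all in blast)
  qed
qed

lemma H_lim_plus:
  assumes F: "finite F" and f: "cont_off F f" and fneg: "\<forall>t\<in>{0..1}. f t \<le> 0"
  shows "(\<lambda>j. measure N {\<omega>\<in>space N. \<forall>t\<in>{0..1}. \<eta> \<omega> t \<le> min (f t + 1/real (Suc j)) 0}) \<longlonglongrightarrow>
    measure N {\<omega>\<in>space N. \<forall>t\<in>{0..1}. \<eta> \<omega> t \<le> f t}"
proof -
  define A where "A j = {\<omega>\<in>space N. \<forall>t\<in>{0..1}. \<eta> \<omega> t \<le> min (f t + 1/real (Suc j)) 0}" for j
  have "range A \<subseteq> sets N" unfolding A_def using meas_le[OF eta_cp F cont_off_minplus[OF f]] by auto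
  moreover have "decseq A"
  proof (rule decseq_SucI, rule subsetI)
    fix j \<omega> assume "\<omega> \<in> A (Suc j)"
    then have \<omega>: "\<omega> \<in> space N" "\<forall>t\<in>{0..1}. \<eta> \<omega> t \<le> min (f t + 1/real (Suc (Suc j))) 0" unfolding A_def by auto
    have le: "1/real (Suc (Suc j)) \<le> 1/real (Suc j)" by (simp add: frac_le)
    have "\<forall>t\<in>{0..1}. \<eta> \<omega> t \<le> min (f t + 1/real (Suc j)) 0"
    proof
      fix t :: real assume "t \<in> {0..1}"
      then have "\<eta> \<omega> t \<le> min (f t + 1/real (Suc (Suc j))) 0" using \<omega> by blast
      then show "\<eta> \<omega> t \<le> min (f t + 1/real (Suc j)) 0" using le by linarith
    qed
    then show "\<omega> \<in> A j" using \<omega> unfolding A_def by blast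
  qed
  ultimately have "(\<lambda>j. measure N (A j)) \<longlonglongrightarrow> measure N (\<Inter>j. A j)" by (rule NP.finite_Lim_measure_decseq)
  moreover have "(\<Inter>j. A j) = {\<omega>\<in>space N. \<forall>t\<in>{0..1}. \<eta> \<omega> t \<le> f t}"
  proof (rule set_eqI)
    fix \<omega>
    show "\<omega> \<in> (\<Inter>j. A j) \<longleftrightarrow> \<omega> \<in> {\<omega>\<in>space N. \<forall>t\<in>{0..1}. \<eta> \<omega> t \<le> f t}"
    proof
      assume H: "\<omega> \<in> (\<Inter>j. A j)"
      then have \<omega>: "\<omega> \<in> space N" unfolding A_def by auto
      have "\<eta> \<omega> t \<le> f t" if t: "t \<in> {0..1}" for t
      proof (rule ccontr)
        assume "\<not> \<eta> \<omega> t \<le> f t"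
        then have pos: "\<eta> \<omega> t - f t > 0" by simp
        obtain j :: nat where j: "inverse (real (Suc j)) < \<eta> \<omega> t - f t"
          using reals_Archimedean[OF pos] by auto
        have "\<omega> \<in> A j" using H by blast
        then have "\<eta> \<omega> t \<le> min (f t + 1/real (Suc j)) 0" using t unfolding A_def by blast
        then show False using j by (simp add: inverse_eq_divide)
      qed
      then show "\<omega> \<in> {\<omega>\<in>space N. \<forall>t\<in>{0..1}. \<eta> \<omega> t \<le> f t}" using \<omega> by blast
    next
      assume H: "\<omega> \<in> {\<omega>\<in>space N. \<forall>t\<in>{0..1}. \<eta> \<omega> t \<le> f t}"
      show "\<omega> \<in> (\<Inter>j. A j)"
      proof
        fix j
        have "\<forall>t\<in>{0..1}. \<eta> \<omega> t \<le> min (f t + 1/real (Suc j)) 0"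
        proof
          fix t :: real assume t: "t \<in> {0..1}"
          then have "\<eta> \<omega> t \<le> f t" using H by blast
          moreover have "f t \<le> 0" using fneg t by blast
          moreover have "1/real (Suc j) > 0" by simp
          ultimately show "\<eta> \<omega> t \<le> min (f t + 1/real (Suc j)) 0" by linarith
        qed
        then show "\<omega> \<in> A j" using H unfolding A_def by blast
      qed
    qed
  qed
  ultimately show ?thesis unfolding A_def by simp
qed

lemma H_zero: "measure N {\<omega>\<in>space N. \<forall>t\<in>{0..1}. \<eta> \<omega> t \<le> 0} = 1"
proof -
  have "{\<omega>\<in>space N. \<forall>t\<in>{0..1}. \<eta> \<omega> t \<le> 0} = space N" using eta_le0 by blast
  then show ?thesis using NP.prob_space by simp
qed

end

lemma continuous_on_MAX:
  fixes g :: "nat \<Rightarrow> real \<Rightarrow> real"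
  assumes "finite I" "I \<noteq> {}" "\<forall>i\<in>I. continuous_on S (g i)"
  shows "continuous_on S (\<lambda>t. MAX i\<in>I. g i t)"
  using assms
proof (induction I rule: finite_ne_induct)
  case (singleton x) then show ?case by simp
next
  case (insert x F)
  have "(\<lambda>t. MAX i\<in>insert x F. g i t) = (\<lambda>t. max (g x t) (MAX i\<in>F. g i t))"
    using insert by (auto simp: fun_eq_iff)
  then show ?case using insert by (simp add: continuous_on_max)
qed

lemma max_proc:
  fixes Ys :: "nat \<Rightarrow> 'a \<Rightarrow> real \<Rightarrow> real"
  assumes Y: "\<forall>i. cont_process M (Ys i)" and a: "continuous_on {0..1} a" "\<forall>t\<in>{0..1}. a t > 0"
    and b: "continuous_on {0..1} b" and n: "n \<ge> 1"
  shows "cont_process M (\<lambda>\<omega> t. MAX i\<in>{1..n}. (Ys i \<omega> t - b t) / a t)"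
  unfolding cont_process_def
proof (intro conjI ballI)
  fix t :: real assume t: "t \<in> {0..1}"
  show "(\<lambda>\<omega>. MAX i\<in>{1..n}. (Ys i \<omega> t - b t) / a t) \<in> borel_measurable M"
  proof (rule borel_measurable_Max)
    fix i
    have [measurable]: "(\<lambda>\<omega>. Ys i \<omega> t) \<in> borel_measurable M" using Y t by (auto simp: cont_process_def)
    show "(\<lambda>\<omega>. (Ys i \<omega> t - b t) / a t) \<in> borel_measurable M" by measurable
  qed simp
next
  fix \<omega> assume \<omega>: "\<omega> \<in> space M"
  show "continuous_on {0..1} (\<lambda>t. MAX i\<in>{1..n}. (Ys i \<omega> t - b t) / a t)"
  proof (rule continuous_on_MAX)
    show "{1..n} \<noteq> {}" using n by simp
    show "\<forall>i\<in>{1..n}. continuous_on {0..1} (\<lambda>t. (Ys i \<omega> t - b t) / a t)"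
    proof
      fix i
      have "continuous_on {0..1} (Ys i \<omega>)" using Y \<omega> by (auto simp: cont_process_def)
      then show "continuous_on {0..1} (\<lambda>t. (Ys i \<omega> t - b t) / a t)"
        using a b by (intro continuous_on_divide continuous_on_diff) auto
    qed
  qed simp
qed

lemma prob_int_lower:
  assumes "prob_space M" "A \<in> sets M" "B \<in> sets M"
  shows "measure M A - (1 - measure M B) \<le> measure M (A \<inter> B)"
proof -
  interpret prob_space M by fact
  have "measure M A = measure M ((A \<inter> B) \<union> (A - B))" by (metis Int_Diff_Un)
  also have "\<dots> = measure M (A \<inter> B) + measure M (A - B)"
    by (rule finite_measure_Union) (use assms in auto)
  also have "measure M (A - B) \<le> measure M (space M - B)"
    by (rule finite_measure_mono) (use assms sets.sets_into_space in auto)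
  also have "measure M (space M - B) = 1 - measure M B" by (rule prob_compl[OF assms(3)])
  finally show ?thesis by simp
qed

lemma E01neg_map:
  assumes f: "f \<in> E01neg" and h: "continuous_on UNIV h" and hb: "\<And>x. \<bar>h x\<bar> \<le> \<bar>x\<bar> + C"
    and hn: "\<And>x. x \<le> 0 \<Longrightarrow> h x \<le> 0"
  shows "(\<lambda>t. h (f t)) \<in> E01neg"
proof -
  have bf: "bounded (f ` {0..1})" and fin: "finite {t\<in>{0..1}. \<not> continuous (at t within {0..1}) f}"
    and fn: "\<forall>t\<in>{0..1}. f t \<le> 0" using f unfolding E01neg_def E01_def by auto
  obtain B where B: "\<forall>x\<in>f ` {0..1}. norm x \<le> B" using bf unfolding bounded_iff by blast
  have "bounded ((\<lambda>t. h (f t)) ` {0..1})" unfolding bounded_iff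
  proof (intro exI[of _ "B + C"] ballI)
    fix y assume "y \<in> (\<lambda>t. h (f t)) ` {0..1}"
    then obtain t where t: "t \<in> {0..1}" "y = h (f t)" by auto
    have "\<bar>f t\<bar> \<le> B" using B t by auto
    then show "norm y \<le> B + C" using hb[of "f t"] t by simp
  qed
  moreover have "{t\<in>{0..1}. \<not> continuous (at t within {0..1}) (\<lambda>t. h (f t))} \<subseteq> {t\<in>{0..1}. \<not> continuous (at t within {0..1}) f}"
  proof (rule subsetI, rule ccontr)
    fix t assume A: "t \<in> {t\<in>{0..1}. \<not> continuous (at t within {0..1}) (\<lambda>t. h (f t))}"
      and B: "t \<notin> {t\<in>{0..1}. \<not> continuous (at t within {0..1}) f}"
    then have c: "continuous (at t within {0..1}) f" by auto
    have "isCont h (f t)" using h continuous_on_eq_continuous_at open_UNIV by blast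
    then have "continuous (at t within {0..1}) (\<lambda>t. h (f t))" by (rule continuous_within_compose3[OF _ c])
    then show False using A by auto
  qed
  then have "finite {t\<in>{0..1}. \<not> continuous (at t within {0..1}) (\<lambda>t. h (f t))}" using fin finite_subset by blast
  moreover have "\<forall>t\<in>{0..1}. h (f t) \<le> 0" using fn hn by auto
  ultimately show ?thesis unfolding E01neg_def E01_def by auto
qed

lemma E01neg_props:
  assumes "f \<in> E01neg"
  shows "finite {t\<in>{0..1}. \<not> continuous (at t within {0..1}) f}"
    "cont_off {t\<in>{0..1}. \<not> continuous (at t within {0..1}) f} f"
    "\<forall>t\<in>{0..1}. f t \<le> 0"
  using assms unfolding E01neg_def E01_def cont_off_def by auto

lemma E01neg_minus: "f \<in> E01neg \<Longrightarrow> c \<ge> 0 \<Longrightarrow> (\<lambda>t. f t - c) \<in> E01neg"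
  by (rule E01neg_map[where h="\<lambda>x. x - c" and C=c]) (auto intro: continuous_on_diff continuous_on_id continuous_on_const)

lemma E01neg_minplus: "f \<in> E01neg \<Longrightarrow> c \<ge> 0 \<Longrightarrow> (\<lambda>t. min (f t + c) 0) \<in> E01neg"
  by (rule E01neg_map[where h="\<lambda>x. min (x + c) 0" and C=c])
    (auto intro: continuous_on_min[OF continuous_on_add[OF continuous_on_id continuous_on_const] continuous_on_const])

lemma E01neg_zero: "(\<lambda>t. 0) \<in> E01neg"
proof -
  have "(\<lambda>t::real. 0::real) ` {0..1} = {0}" by (rule image_constant[of 0]) simp
  then have "bounded ((\<lambda>t::real. 0::real) ` {0..1})" by simp
  then show ?thesis unfolding E01neg_def E01_def by auto
qed




theorem mainTheorem6:
  fixes M :: "'a measure" and N :: "'b measure"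
    and Y :: "'a \<Rightarrow> real \<Rightarrow> real" and Ys :: "nat \<Rightarrow> 'a \<Rightarrow> real \<Rightarrow> real"
    and \<eta> :: "'b \<Rightarrow> real \<Rightarrow> real"
    and a b :: "nat \<Rightarrow> real \<Rightarrow> real"
  assumes "prob_space M"
    and "std_max_stable N \<eta>"
    and "cont_process M Y"
    and "\<forall>i. cont_process M (Ys i)"
    and "indep_copies M Y Ys"
    and "\<forall>n. a n \<in> C01 \<and> (\<forall>t\<in>{0..1}. a n t > 0) \<and> b n \<in> C01"
  shows "(\<forall>f\<in>E01neg.
            (\<lambda>n. measure M {\<omega> \<in> space M. \<forall>t\<in>{0..1}.
                    (MAX i\<in>{1..n}. (Ys i \<omega> t - b n t) / a n t) \<le> f t})
            \<longlonglongrightarrow> measure N {\<omega> \<in> space N. \<forall>t\<in>{0..1}. \<eta> \<omega> t \<le> f t})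
     \<longleftrightarrow>
         (\<forall>f\<in>E01neg.
            (\<lambda>n. measure M {\<omega> \<in> space M. \<forall>t\<in>{0..1}.
                    (MAX i\<in>{1..n}. (Ys i \<omega> t - b n t) / a n t) < f t})
            \<longlonglongrightarrow> measure N {\<omega> \<in> space N. \<forall>t\<in>{0..1}. \<eta> \<omega> t < f t})"
proof -
  note PM = assms(1) and sms = assms(2)
  interpret MP: prob_space M by (rule PM)
  define X where "X n \<omega> t = (MAX i\<in>{1..n}. (Ys i \<omega> t - b n t) / a n t)" for n \<omega> t
  define P where "P n g = measure M {\<omega>\<in>space M. \<forall>t\<in>{0..1}. X n \<omega> t \<le> g t}" for n g
  define Q where "Q n g = measure M {\<omega>\<in>space M. \<forall>t\<in>{0..1}. X n \<omega> t < g t}" for n g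
  define H where "H g = measure N {\<omega>\<in>space N. \<forall>t\<in>{0..1}. \<eta> \<omega> t \<le> g t}" for g
  define G where "G g = measure N {\<omega>\<in>space N. \<forall>t\<in>{0..1}. \<eta> \<omega> t < g t}" for g
  have Xcp: "cont_process M (X n)" if n: "n \<ge> 1" for n
    unfolding X_def using assms(4,6) n
    by (intro max_proc) (auto simp: C01_def)
  define DF where "DF f = {t\<in>{0..1}. \<not> continuous (at t within {0..1}) f}" for f :: "real \<Rightarrow> real"
  note EP = E01neg_props[folded DF_def]
  have GH: "G f = H f" if "f \<in> E01neg" for f
    unfolding G_def H_def by (rule G_eq_H[OF sms EP(1)[OF that] EP(2)[OF that] EP(3)[OF that]])
  have QP: "Q n f \<le> P n f" if "f \<in> E01neg" "n \<ge> 1" for f n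
    unfolding P_def Q_def
    by (rule MP.finite_measure_mono[OF _ meas_le[OF Xcp[OF that(2)] EP(1)[OF that(1)] EP(2)[OF that(1)]]]) auto
  have PQ: "P n (\<lambda>t. f t - c) \<le> Q n f" if "f \<in> E01neg" "n \<ge> 1" "c > 0" for f n c
    unfolding P_def Q_def
  proof (rule MP.finite_measure_mono[OF _ meas_lt[OF Xcp[OF that(2)] EP(1)[OF that(1)] EP(2)[OF that(1)]]])
    show "{\<omega> \<in> space M. \<forall>t\<in>{0..1}. X n \<omega> t \<le> f t - c} \<subseteq> {\<omega> \<in> space M. \<forall>t\<in>{0..1}. X n \<omega> t < f t}"
    proof (rule subsetI)
      fix \<omega> assume A: "\<omega> \<in> {\<omega> \<in> space M. \<forall>t\<in>{0..1}. X n \<omega> t \<le> f t - c}"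
      have "\<forall>t\<in>{0..1}. X n \<omega> t < f t"
      proof
        fix t :: real assume "t \<in> {0..1}"
        then have "X n \<omega> t \<le> f t - c" using A by blast
        then show "X n \<omega> t < f t" using that(3) by linarith
      qed
      then show "\<omega> \<in> {\<omega> \<in> space M. \<forall>t\<in>{0..1}. X n \<omega> t < f t}" using A by blast
    qed
  qed
  have PU: "P n f \<le> Q n (\<lambda>t. min (f t + c) 0) + (1 - Q n (\<lambda>t. 0))" if "f \<in> E01neg" "n \<ge> 1" "c > 0" for f n c
  proof -
    define A where "A = {\<omega>\<in>space M. \<forall>t\<in>{0..1}. X n \<omega> t \<le> f t}"
    define B where "B = {\<omega>\<in>space M. \<forall>t\<in>{0..1}. X n \<omega> t < min (f t + c) 0}"
    define C where "C = {\<omega>\<in>space M. \<forall>t\<in>{0..1}. X n \<omega> t < 0}"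
    have As: "A \<in> sets M" unfolding A_def by (rule meas_le[OF Xcp[OF that(2)] EP(1)[OF that(1)] EP(2)[OF that(1)]])
    have Bs: "B \<in> sets M" unfolding B_def
      by (rule meas_lt[OF Xcp[OF that(2)] EP(1)[OF that(1)] cont_off_minplus[OF EP(2)[OF that(1)]]])
    have Cs: "C \<in> sets M" unfolding C_def
      by (rule meas_lt[OF Xcp[OF that(2)] finite.emptyI cont_off_const])
    have "A \<inter> C \<subseteq> B"
    proof (rule subsetI)
      fix \<omega> assume w: "\<omega> \<in> A \<inter> C"
      have "\<forall>t\<in>{0..1}. X n \<omega> t < min (f t + c) 0"
      proof
        fix t :: real assume t: "t \<in> {0..1}"
        have "X n \<omega> t \<le> f t" "X n \<omega> t < 0" using w t unfolding A_def C_def by auto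
        then show "X n \<omega> t < min (f t + c) 0" using that(3) by simp
      qed
      then show "\<omega> \<in> B" using w unfolding A_def B_def by blast
    qed
    then have "measure M (A \<inter> C) \<le> measure M B" by (rule MP.finite_measure_mono[OF _ Bs])
    moreover have "measure M A - (1 - measure M C) \<le> measure M (A \<inter> C)" by (rule prob_int_lower[OF PM As Cs])
    ultimately show ?thesis unfolding P_def Q_def A_def B_def C_def by simp
  qed
  have H0: "H (\<lambda>t. 0) = 1" unfolding H_def by (rule H_zero[OF sms])
  have main: "(\<forall>f\<in>E01neg. (\<lambda>n. P n f) \<longlonglongrightarrow> H f) \<longleftrightarrow> (\<forall>f\<in>E01neg. (\<lambda>n. Q n f) \<longlonglongrightarrow> G f)"
  proof
    assume L: "\<forall>f\<in>E01neg. (\<lambda>n. P n f) \<longlonglongrightarrow> H f"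
    show "\<forall>f\<in>E01neg. (\<lambda>n. Q n f) \<longlonglongrightarrow> G f"
    proof
      fix f assume f: "f \<in> E01neg"
      show "(\<lambda>n. Q n f) \<longlonglongrightarrow> G f" unfolding GH[OF f]
      proof (rule LIMSEQ_I)
        fix r :: real assume r: "r > 0"
        have "(\<lambda>j. H (\<lambda>t. f t - 1/real (Suc j))) \<longlonglongrightarrow> H f"
          unfolding H_def by (rule H_lim_minus[OF sms EP(1)[OF f] EP(2)[OF f] EP(3)[OF f]])
        from LIMSEQ_D[OF this, of "r/2"] r obtain j0 where j0: "\<forall>j\<ge>j0. norm (H (\<lambda>t. f t - 1/real (Suc j)) - H f) < r/2" by auto
        define fj where "fj = (\<lambda>t. f t - 1/real (Suc j0))"
        have hj: "\<bar>H fj - H f\<bar> < r/2" using j0 unfolding fj_def by auto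
        have fjE: "fj \<in> E01neg" unfolding fj_def by (rule E01neg_minus[OF f]) simp
        from LIMSEQ_D[OF L[rule_format, OF fjE], of "r/2"] r
        obtain n1 where n1: "\<forall>n\<ge>n1. norm (P n fj - H fj) < r/2" by auto
        from LIMSEQ_D[OF L[rule_format, OF f], of r] r
        obtain n2 where n2: "\<forall>n\<ge>n2. norm (P n f - H f) < r" by auto
        show "\<exists>no. \<forall>n\<ge>no. norm (Q n f - H f) < r"
        proof (intro exI allI impI)
          fix n assume n: "max (max n1 n2) 1 \<le> n"
          have "P n fj \<le> Q n f" unfolding fj_def by (rule PQ[OF f]) (use n in auto)
          moreover have "Q n f \<le> P n f" by (rule QP[OF f]) (use n in auto)
          moreover have "\<bar>P n fj - H fj\<bar> < r/2" using n1 n by auto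
          moreover have "\<bar>P n f - H f\<bar> < r" using n2 n by auto
          ultimately have "\<bar>Q n f - H f\<bar> < r"
            using hj abs_less_iff[of "P n fj - H fj" "r/2"] abs_less_iff[of "H fj - H f" "r/2"]
              abs_less_iff[of "P n f - H f" r] abs_less_iff[of "Q n f - H f" r] by linarith
          then show "norm (Q n f - H f) < r" by simp
        qed
      qed
    qed
  next
    assume R: "\<forall>f\<in>E01neg. (\<lambda>n. Q n f) \<longlonglongrightarrow> G f"
    show "\<forall>f\<in>E01neg. (\<lambda>n. P n f) \<longlonglongrightarrow> H f"
    proof
      fix f assume f: "f \<in> E01neg"
      show "(\<lambda>n. P n f) \<longlonglongrightarrow> H f"
      proof (rule LIMSEQ_I)
        fix r :: real assume r: "r > 0"
        have "(\<lambda>j. H (\<lambda>t. min (f t + 1/real (Suc j)) 0)) \<longlonglongrightarrow> H f"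
          unfolding H_def by (rule H_lim_plus[OF sms EP(1)[OF f] EP(2)[OF f] EP(3)[OF f]])
        from LIMSEQ_D[OF this, of "r/3"] r obtain j0 where j0: "\<forall>j\<ge>j0. norm (H (\<lambda>t. min (f t + 1/real (Suc j)) 0) - H f) < r/3" by auto
        define fj where "fj = (\<lambda>t. min (f t + 1/real (Suc j0)) 0)"
        have hj: "\<bar>H fj - H f\<bar> < r/3" using j0 unfolding fj_def by auto
        have fjE: "fj \<in> E01neg" unfolding fj_def by (rule E01neg_minplus[OF f]) simp
        from LIMSEQ_D[OF R[rule_format, OF fjE], of "r/3"] r
        obtain n1 where n1: "\<forall>n\<ge>n1. norm (Q n fj - G fj) < r/3" by auto
        from LIMSEQ_D[OF R[rule_format, OF E01neg_zero], of "r/3"] r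
        obtain n2 where n2: "\<forall>n\<ge>n2. norm (Q n (\<lambda>t. 0) - G (\<lambda>t. 0)) < r/3" by auto
        from LIMSEQ_D[OF R[rule_format, OF f], of r] r
        obtain n3 where n3: "\<forall>n\<ge>n3. norm (Q n f - G f) < r" by auto
        have G0: "G (\<lambda>t. 0) = 1" using GH[OF E01neg_zero] H0 by simp
        show "\<exists>no. \<forall>n\<ge>no. norm (P n f - H f) < r"
        proof (intro exI allI impI)
          fix n assume n: "max (max n1 n2) (max n3 1) \<le> n"
          have "Q n f \<le> P n f" by (rule QP[OF f]) (use n in auto)
          moreover have "P n f \<le> Q n fj + (1 - Q n (\<lambda>t. 0))" unfolding fj_def by (rule PU[OF f]) (use n in auto)
          moreover have "\<bar>Q n fj - H fj\<bar> < r/3" using n1 n GH[OF fjE] by auto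
          moreover have "\<bar>Q n (\<lambda>t. 0) - 1\<bar> < r/3" using n2 n G0 by auto
          moreover have "\<bar>Q n f - H f\<bar> < r" using n3 n GH[OF f] by auto
          ultimately have "\<bar>P n f - H f\<bar> < r"
            using hj abs_less_iff[of "Q n fj - H fj" "r/3"] abs_less_iff[of "Q n (\<lambda>t. 0) - 1" "r/3"]
              abs_less_iff[of "Q n f - H f" r] abs_less_iff[of "H fj - H f" "r/3"]
              abs_less_iff[of "P n f - H f" r] by linarith
          then show "norm (P n f - H f) < r" by simp
        qed
      qed
    qed
  qed
  show ?thesis using main unfolding P_def Q_def H_def G_def X_def .
qed


end
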